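(* Let $X$ be a Banach space, let $(P_n)\subset\mathcal L(X)$ be a uniformly bounded sequence of projections with $P_nP_m=0$ for $n\ne m$, let $X_n=P_nX$ with inclusion $J_n:X_n\to X$, and suppose there are $1\le p\le\infty$ and $C,D<\infty$ with $\|\sum_n x_n\|\le C(\sum_n\|x_n\|^p)^{1/p}$ whenever $x_n\in X_n$, $\sum_n\|x_n\|^p<\infty$, and $(\sum_n\|P_nx\|^p)^{1/p}\le D\|x\|$ for $x\in X$ (with the usual supremum/$c_0$ modifications for $p=\infty$). Let $S_n\in\mathcal K(X_n)$ satisfy $\mathrm{dist}(S_n,\mathcal A(X_n))=1$ and $\|S_n\|\le2$, put $U_n=J_nS_nP_n\in\mathcal K(X)$, and let $\psi:c_0\to\mathcal K(X)/\mathcal A(X)$ be the linear embedding $\psi((a_k))=\sum_{k=1}^\infty a_kU_k+\mathcal A(X)$. Then the closed subalgebra $\mathcal B$ of $\mathcal K(X)/\mathcal A(X)$ generated by $\psi(c_0)$ is commutative.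
   Context: $\mathcal L(X)$ denotes the bounded operators on $X$, $\mathcal K(X,Y)$ the compact operators, $\mathcal A(X,Y)$ the norm closure of the finite rank operators, and $\mathcal K(X)/\mathcal A(X)$ the quotient Banach algebra with quotient norm. Under the stated hypotheses the series $\sum_k a_kU_k$ converges in $\mathcal K(X)$ for $(a_k)\in c_0$ and $\psi$ is a linear isomorphic embedding. *)

theory Defs
  imports "HOL-Analysis.Analysis"
begin

text \<open>Operators on a linear subspace V of X, represented by functions on X
  (only their values on V matter).\<close>

definition bounded_op_on :: "'a::real_normed_vector set \<Rightarrow> ('a \<Rightarrow> 'a) \<Rightarrow> bool" where
  "bounded_op_on V T \<longleftrightarrow>
     (\<forall>x\<in>V. T x \<in> V) \<and>
     (\<forall>x\<in>V. \<forall>y\<in>V. T (x + y) = T x + T y) \<and>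
     (\<forall>c. \<forall>x\<in>V. T (c *\<^sub>R x) = c *\<^sub>R T x) \<and>
     (\<exists>K. \<forall>x\<in>V. norm (T x) \<le> K * norm x)"

definition opnorm_on :: "'a::real_normed_vector set \<Rightarrow> ('a \<Rightarrow> 'a) \<Rightarrow> real" where
  "opnorm_on V T = Sup ((\<lambda>x. norm (T x)) ` (V \<inter> cball 0 1))"

definition finite_rank_on :: "'a::real_normed_vector set \<Rightarrow> ('a \<Rightarrow> 'a) \<Rightarrow> bool" where
  "finite_rank_on V T \<longleftrightarrow> bounded_op_on V T \<and> (\<exists>B. finite B \<and> T ` V \<subseteq> span B)"

definition approx_on :: "'a::real_normed_vector set \<Rightarrow> ('a \<Rightarrow> 'a) \<Rightarrow> bool" where
  "approx_on V T \<longleftrightarrow> bounded_op_on V T \<and>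
     (\<forall>e>0. \<exists>F. finite_rank_on V F \<and> opnorm_on V (\<lambda>x. T x - F x) < e)"

definition compact_op_on :: "'a::real_normed_vector set \<Rightarrow> ('a \<Rightarrow> 'a) \<Rightarrow> bool" where
  "compact_op_on V T \<longleftrightarrow> bounded_op_on V T \<and> compact (closure (T ` (V \<inter> cball 0 1)))"

definition dist_approx_on :: "'a::real_normed_vector set \<Rightarrow> ('a \<Rightarrow> 'a) \<Rightarrow> real" where
  "dist_approx_on V S = Inf ((\<lambda>F. opnorm_on V (\<lambda>x. S x - F x)) ` {F. approx_on V F})"

definition AX :: "('a::banach \<Rightarrow>\<^sub>L 'a) set" where
  "AX = closure {T. finite_rank_on UNIV (blinfun_apply T)}"

definition KX :: "('a::banach \<Rightarrow>\<^sub>L 'a) set" where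
  "KX = {T. compact_op_on UNIV (blinfun_apply T)}"

definition qnorm :: "('a::banach \<Rightarrow>\<^sub>L 'a) \<Rightarrow> real" where
  "qnorm T = infdist T AX"

definition psi_rep :: "(nat \<Rightarrow> ('a::banach \<Rightarrow>\<^sub>L 'a)) \<Rightarrow> (nat \<Rightarrow> real) \<Rightarrow> ('a \<Rightarrow>\<^sub>L 'a)" where
  "psi_rep U a = (\<Sum>k. a k *\<^sub>R U k)"

text \<open>Preimage in \<open>\<K>(X)\<close> under the quotient map of the closed subalgebra \<open>\<B>\<close>
  of \<open>\<K>(X)/\<A>(X)\<close> generated by \<open>\<psi>(c\<^sub>0)\<close>: the smallest set of
  representatives containing the \<open>\<psi>\<close>-representatives and \<open>\<A>(X)\<close> (the zero class),
  closed under the algebra operations and under limits in the quotient norm.\<close>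
inductive_set B_pre :: "(nat \<Rightarrow> ('a::banach \<Rightarrow>\<^sub>L 'a)) \<Rightarrow> ('a \<Rightarrow>\<^sub>L 'a) set"
  for U :: "nat \<Rightarrow> ('a::banach \<Rightarrow>\<^sub>L 'a)" where
  gen: "a \<longlonglongrightarrow> 0 \<Longrightarrow> psi_rep U a \<in> B_pre U"
| zero: "T \<in> AX \<Longrightarrow> T \<in> B_pre U"
| add: "T \<in> B_pre U \<Longrightarrow> S \<in> B_pre U \<Longrightarrow> T + S \<in> B_pre U"
| scale: "T \<in> B_pre U \<Longrightarrow> c *\<^sub>R T \<in> B_pre U"
| mult: "T \<in> B_pre U \<Longrightarrow> S \<in> B_pre U \<Longrightarrow> T o\<^sub>L S \<in> B_pre U"
| lim: "T \<in> KX \<Longrightarrow> (\<forall>e>0. \<exists>S. S \<in> B_pre U \<and> qnorm (T - S) < e) \<Longrightarrow> T \<in> B_pre U"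

end

theory Submission
  imports Defs
begin


lemma bop_blinfun: "bounded_op_on UNIV (blinfun_apply T)"
  unfolding bounded_op_on_def
  by (auto simp: blinfun.add_right blinfun.scaleR_right intro: norm_blinfun)

definition FR :: "('a::banach \<Rightarrow>\<^sub>L 'a) set" where
  "FR = {T. finite_rank_on UNIV (blinfun_apply T)}"

lemma FR_iff: "T \<in> FR \<longleftrightarrow> (\<exists>B. finite B \<and> range (blinfun_apply T) \<subseteq> span B)"
  unfolding FR_def finite_rank_on_def using bop_blinfun by auto

lemma FR_add: "T \<in> FR \<Longrightarrow> S \<in> FR \<Longrightarrow> T + S \<in> FR"
proof -
  assume "T \<in> FR" "S \<in> FR"
  then obtain B1 B2 where b: "finite B1" "range (blinfun_apply T) \<subseteq> span B1"
     "finite B2" "range (blinfun_apply S) \<subseteq> span B2" unfolding FR_iff by blast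
  have "range (blinfun_apply (T + S)) \<subseteq> span (B1 \<union> B2)"
  proof
    fix y assume "y \<in> range (blinfun_apply (T + S))"
    then obtain x where "y = T x + S x" by (auto simp: blinfun.add_left)
    moreover have "T x \<in> span (B1 \<union> B2)" using b(2) span_mono[of B1 "B1 \<union> B2"] by auto
    moreover have "S x \<in> span (B1 \<union> B2)" using b(4) span_mono[of B2 "B1 \<union> B2"] by auto
    ultimately show "y \<in> span (B1 \<union> B2)" by (simp add: span_add)
  qed
  then show ?thesis using b unfolding FR_iff by blast
qed

lemma FR_scale: "T \<in> FR \<Longrightarrow> c *\<^sub>R T \<in> FR"
proof -
  assume "T \<in> FR"
  then obtain B where b: "finite B" "range (blinfun_apply T) \<subseteq> span B" unfolding FR_iff by blast
  have "range (blinfun_apply (c *\<^sub>R T)) \<subseteq> span B"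
    using b(2) by (auto simp: span_scale blinfun.scaleR_left)
  then show ?thesis using b unfolding FR_iff by blast
qed

lemma FR_zero: "0 \<in> FR"
  unfolding FR_iff by (rule exI[of _ "{}"]) auto

lemma FR_compR: "T \<in> FR \<Longrightarrow> T o\<^sub>L R \<in> FR"
proof -
  assume "T \<in> FR"
  then obtain B where b: "finite B" "range (blinfun_apply T) \<subseteq> span B" unfolding FR_iff by blast
  have "range (blinfun_apply (T o\<^sub>L R)) \<subseteq> span B"
    using b(2) by auto
  then show ?thesis using b unfolding FR_iff by blast
qed

lemma FR_compL: "T \<in> FR \<Longrightarrow> R o\<^sub>L T \<in> FR"
proof -
  assume "T \<in> FR"
  then obtain B where b: "finite B" "range (blinfun_apply T) \<subseteq> span B" unfolding FR_iff by blast
  have lin: "linear (blinfun_apply R)" by (simp add: blinfun.bounded_linear_right bounded_linear.linear)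
  have "range (blinfun_apply (R o\<^sub>L T)) \<subseteq> span (blinfun_apply R ` B)"
    using b(2) unfolding span_linear_image[OF lin] by auto
  then show ?thesis using b unfolding FR_iff by blast
qed

lemma AX_eq: "AX = closure FR" unfolding AX_def FR_def ..

lemma AX_closed: "closed AX" unfolding AX_eq by simp

lemma AX_zero: "0 \<in> AX" unfolding AX_eq using FR_zero closure_subset by blast

lemma AX_add: assumes "T \<in> AX" "S \<in> AX" shows "T + S \<in> AX"
proof -
  obtain f where f: "\<And>n. f n \<in> FR" "f \<longlonglongrightarrow> T" using assms(1) unfolding AX_eq closure_sequential by blast
  obtain g where g: "\<And>n. g n \<in> FR" "g \<longlonglongrightarrow> S" using assms(2) unfolding AX_eq closure_sequential by blast
  have "(\<lambda>n. f n + g n) \<longlonglongrightarrow> T + S" using f g by (intro tendsto_add)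
  moreover have "\<And>n. f n + g n \<in> FR" using f g FR_add by blast
  ultimately show ?thesis unfolding AX_eq closure_sequential by (intro exI) auto
qed

lemma AX_scale: assumes "T \<in> AX" shows "c *\<^sub>R T \<in> AX"
proof -
  obtain f where f: "\<And>n. f n \<in> FR" "f \<longlonglongrightarrow> T" using assms(1) unfolding AX_eq closure_sequential by blast
  have "(\<lambda>n. c *\<^sub>R f n) \<longlonglongrightarrow> c *\<^sub>R T" using f by (intro tendsto_scaleR) auto
  moreover have "\<And>n. c *\<^sub>R f n \<in> FR" using f FR_scale by blast
  ultimately show ?thesis unfolding AX_eq closure_sequential by (intro exI) auto
qed

lemma AX_uminus: "T \<in> AX \<Longrightarrow> - T \<in> AX"
  using AX_scale[of T "-1"] by simp

lemma AX_diff: "T \<in> AX \<Longrightarrow> S \<in> AX \<Longrightarrow> T - S \<in> AX"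
  by (metis AX_add AX_uminus diff_conv_add_uminus)

lemma AX_compR: assumes "T \<in> AX" shows "T o\<^sub>L R \<in> AX"
proof -
  obtain f where f: "\<And>n. f n \<in> FR" "f \<longlonglongrightarrow> T" using assms(1) unfolding AX_eq closure_sequential by blast
  have "(\<lambda>n. f n o\<^sub>L R) \<longlonglongrightarrow> (T o\<^sub>L R)"
    using f(2) by (intro bounded_bilinear.tendsto[OF bounded_bilinear_blinfun_compose]) auto
  moreover have "\<And>n. f n o\<^sub>L R \<in> FR" using f FR_compR by blast
  ultimately show ?thesis unfolding AX_eq closure_sequential by (intro exI) auto
qed

lemma AX_compL: assumes "T \<in> AX" shows "R o\<^sub>L T \<in> AX"
proof -
  obtain f where f: "\<And>n. f n \<in> FR" "f \<longlonglongrightarrow> T" using assms(1) unfolding AX_eq closure_sequential by blast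
  have "(\<lambda>n. R o\<^sub>L f n) \<longlonglongrightarrow> (R o\<^sub>L T)"
    using f(2) by (intro bounded_bilinear.tendsto[OF bounded_bilinear_blinfun_compose]) auto
  moreover have "\<And>n. R o\<^sub>L f n \<in> FR" using f FR_compL by blast
  ultimately show ?thesis unfolding AX_eq closure_sequential by (intro exI) auto
qed



lemmas bbc = bounded_bilinear_blinfun_compose
lemmas cmp_simps = bounded_bilinear.add_left[OF bbc] bounded_bilinear.add_right[OF bbc]
  bounded_bilinear.diff_left[OF bbc] bounded_bilinear.diff_right[OF bbc]
  bounded_bilinear.scaleR_left[OF bbc] bounded_bilinear.scaleR_right[OF bbc]

lemma blinfun_compose_assoc: "(A o\<^sub>L B) o\<^sub>L C = A o\<^sub>L (B o\<^sub>L C)"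
  by (rule blinfun_eqI) simp

lemma qnorm_approx:
  assumes "qnorm T < e" obtains A where "A \<in> AX" "norm (T - A) < e"
proof -
  have ne: "AX \<noteq> {}" using AX_zero by blast
  have "(INF a\<in>AX. dist T a) < e" using assms ne unfolding qnorm_def infdist_notempty[OF ne] by simp
  then obtain A where "A \<in> AX" "dist T A < e"
    using cINF_less_iff[OF ne, of "dist T" e] by (auto intro: bdd_belowI2[of _ 0])
  then show ?thesis using that by (simp add: dist_norm)
qed

lemma comm_lemma:
  assumes gen: "\<And>a. a \<longlonglongrightarrow> 0 \<Longrightarrow> (X o\<^sub>L psi_rep U a) - (psi_rep U a o\<^sub>L X) \<in> AX"
  shows "T \<in> B_pre U \<Longrightarrow> (X o\<^sub>L T) - (T o\<^sub>L X) \<in> AX"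
proof (induction T rule: B_pre.induct)
  case (gen a)
  then show ?case using assms by blast
next
  case (zero T)
  then show ?case using AX_compL AX_compR AX_diff by blast
next
  case (add T S)
  have "(X o\<^sub>L (T + S)) - ((T + S) o\<^sub>L X) = ((X o\<^sub>L T) - (T o\<^sub>L X)) + ((X o\<^sub>L S) - (S o\<^sub>L X))"
    by (simp add: cmp_simps algebra_simps)
  then show ?case using add AX_add by simp
next
  case (scale T c)
  have "(X o\<^sub>L (c *\<^sub>R T)) - ((c *\<^sub>R T) o\<^sub>L X) = c *\<^sub>R ((X o\<^sub>L T) - (T o\<^sub>L X))"
    by (simp add: cmp_simps algebra_simps)
  then show ?case using scale AX_scale by simp
next
  case (mult T S)
  have "(X o\<^sub>L (T o\<^sub>L S)) - ((T o\<^sub>L S) o\<^sub>L X) = (((X o\<^sub>L T) - (T o\<^sub>L X)) o\<^sub>L S) + (T o\<^sub>L ((X o\<^sub>L S) - (S o\<^sub>L X)))"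
    by (simp add: cmp_simps blinfun_compose_assoc algebra_simps)
  then show ?case using AX_add[OF AX_compR[OF mult.IH(1)] AX_compL[OF mult.IH(2)]] by simp
next
  case (lim T)
  let ?c = "\<lambda>Y. (X o\<^sub>L Y) - (Y o\<^sub>L X)"
  have "?c T \<in> closure AX"
    unfolding closure_approachable
  proof (intro allI impI)
    fix e :: real assume e: "e > 0"
    define K where "K = 2 * norm X + 1"
    have K: "K > 0" unfolding K_def by (simp add: add_nonneg_pos)
    obtain S where S: "S \<in> B_pre U" "?c S \<in> AX" "qnorm (T - S) < e / K"
      using lim.IH K e by (meson divide_pos_pos)
    obtain A where A: "A \<in> AX" "norm (T - S - A) < e / K" using qnorm_approx[OF S(3)] by blast
    define E where "E = T - S - A"
    have TE: "T = S + A + E" unfolding E_def by simp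
    have cT: "?c T = (?c S + ?c A) + ?c E"
      unfolding TE by (simp add: cmp_simps algebra_simps)
    have inAX: "?c S + ?c A \<in> AX" using S(2) A(1) AX_compL AX_compR AX_diff AX_add by blast
    have "norm (?c E) \<le> norm (X o\<^sub>L E) + norm (E o\<^sub>L X)" by (rule norm_triangle_ineq4)
    also have "\<dots> \<le> norm X * norm E + norm E * norm X"
      by (intro add_mono norm_blinfun_compose)
    also have "\<dots> = 2 * norm X * norm E" by simp
    also have "\<dots> \<le> K * norm E" unfolding K_def by (intro mult_right_mono) auto
    also have "\<dots> < K * (e / K)" using A(2) K unfolding E_def by (intro mult_strict_left_mono) auto
    also have "\<dots> = e" using K by simp
    finally have "norm (?c E) < e" .
    then show "\<exists>y\<in>AX. dist y (?c T) < e"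
      using inAX by (intro bexI[of _ "?c S + ?c A"]) (auto simp: cT dist_norm norm_minus_commute)
  qed
  then show ?case using AX_closed closure_closed by metis
qed



lemma prod_formula:
  fixes U :: "nat \<Rightarrow> ('a::banach \<Rightarrow>\<^sub>L 'a)"
  assumes sa: "summable (\<lambda>k. a k *\<^sub>R U k)" and sb: "summable (\<lambda>k. b k *\<^sub>R U k)"
    and orth: "\<And>j k. j \<noteq> k \<Longrightarrow> U k o\<^sub>L U j = 0"
  shows "psi_rep U a o\<^sub>L psi_rep U b = (\<Sum>k. (a k * b k) *\<^sub>R (U k o\<^sub>L U k))"
proof -
  let ?Y = "psi_rep U b"
  have "psi_rep U a o\<^sub>L ?Y = (\<Sum>k. (a k *\<^sub>R U k) o\<^sub>L ?Y)"
    unfolding psi_rep_def[of U a]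
    by (rule bounded_linear.suminf[OF bounded_bilinear.bounded_linear_left[OF bbc] sa])
  also have "\<dots> = (\<Sum>k. (a k * b k) *\<^sub>R (U k o\<^sub>L U k))"
  proof (rule suminf_cong)
    fix k
    have "U k o\<^sub>L ?Y = (\<Sum>j. U k o\<^sub>L (b j *\<^sub>R U j))"
      unfolding psi_rep_def[of U b]
      by (rule bounded_linear.suminf[OF bounded_bilinear.bounded_linear_right[OF bbc] sb])
    also have "\<dots> = (\<Sum>j. if j = k then b k *\<^sub>R (U k o\<^sub>L U k) else 0)"
      by (rule suminf_cong) (auto simp: cmp_simps orth)
    also have "\<dots> = b k *\<^sub>R (U k o\<^sub>L U k)"
      using sums_unique[OF sums_single[of k "\<lambda>_. b k *\<^sub>R (U k o\<^sub>L U k)"]] by simp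
    finally show "(a k *\<^sub>R U k) o\<^sub>L ?Y = (a k * b k) *\<^sub>R (U k o\<^sub>L U k)"
      by (simp add: cmp_simps)
  qed
  finally show ?thesis .
qed

lemma summable_psi:
  fixes U :: "nat \<Rightarrow> ('a::banach \<Rightarrow>\<^sub>L 'a)"
  assumes key: "\<And>c \<epsilon> n x. 0 \<le> \<epsilon> \<Longrightarrow> (\<forall>k. \<bar>c k\<bar> \<le> \<epsilon>) \<Longrightarrow>
      norm (\<Sum>k<n. c k *\<^sub>R U k x) \<le> M * \<epsilon> * norm x"
    and a: "a \<longlonglongrightarrow> 0"
  shows "summable (\<lambda>k. a k *\<^sub>R U k)"
  unfolding summable_Cauchy
proof (intro allI impI)
  fix e :: real assume e: "e > 0"
  define \<epsilon> where "\<epsilon> = e / (2 * (\<bar>M\<bar> + 1))"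
  have \<epsilon>: "\<epsilon> > 0" unfolding \<epsilon>_def using e by (simp add: add_nonneg_pos)
  obtain N where N: "\<And>k. k \<ge> N \<Longrightarrow> \<bar>a k\<bar> < \<epsilon>"
    using a \<epsilon> unfolding LIMSEQ_def by (auto simp: dist_real_def)
  show "\<exists>N. \<forall>m\<ge>N. \<forall>n. norm (sum (\<lambda>k. a k *\<^sub>R U k) {m..<n}) < e"
  proof (intro exI allI impI)
    fix m n assume m: "m \<ge> N"
    define c where "c k = (if m \<le> k then a k else 0)" for k
    have c: "\<forall>k. \<bar>c k\<bar> \<le> \<epsilon>" using N m \<epsilon> unfolding c_def by (auto intro: less_imp_le)
    have "norm (sum (\<lambda>k. a k *\<^sub>R U k) {m..<n}) \<le> \<bar>M\<bar> * \<epsilon>"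
    proof (rule norm_blinfun_bound)
      show "0 \<le> \<bar>M\<bar> * \<epsilon>" using \<epsilon> by simp
      fix x
      have "blinfun_apply (sum (\<lambda>k. a k *\<^sub>R U k) {m..<n}) x = (\<Sum>k<n. c k *\<^sub>R U k x)"
      proof -
        have "blinfun_apply (sum (\<lambda>k. a k *\<^sub>R U k) {m..<n}) x = (\<Sum>k\<in>{m..<n}. a k *\<^sub>R U k x)"
          by (simp add: blinfun.sum_left blinfun.scaleR_left)
        also have "\<dots> = (\<Sum>k\<in>{..<n}. c k *\<^sub>R U k x)"
          unfolding c_def by (rule sum.mono_neutral_cong_left) auto
        finally show ?thesis .
      qed
      also have "norm \<dots> \<le> M * \<epsilon> * norm x" using key[of \<epsilon> c] \<epsilon> c by simp
      also have "\<dots> \<le> \<bar>M\<bar> * \<epsilon> * norm x" using \<epsilon>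
        by (intro mult_right_mono) auto
      finally show "norm (blinfun_apply (sum (\<lambda>k. a k *\<^sub>R U k) {m..<n}) x) \<le> \<bar>M\<bar> * \<epsilon> * norm x" .
    qed
    also have "\<dots> < e" unfolding \<epsilon>_def using e
      by (simp add: field_simps) (smt (verit) mult_nonneg_nonneg abs_ge_zero e)
    finally show "norm (sum (\<lambda>k. a k *\<^sub>R U k) {m..<n}) < e" .
  qed
qed



theorem proposition2p7:
  fixes P :: "nat \<Rightarrow> ('a::banach \<Rightarrow>\<^sub>L 'a)"
    and S :: "nat \<Rightarrow> 'a \<Rightarrow> 'a"
    and U :: "nat \<Rightarrow> ('a \<Rightarrow>\<^sub>L 'a)"
  assumes proj: "\<And>n. P n o\<^sub>L P n = P n"
    and orth: "\<And>n m. n \<noteq> m \<Longrightarrow> P n o\<^sub>L P m = 0"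
    and unif: "\<exists>M. \<forall>n. norm (P n) \<le> M"
    and decomp:
      "(\<exists>p::real. p \<ge> 1 \<and> (\<exists>C D.
          (\<forall>x N. (\<forall>n. x n \<in> range (blinfun_apply (P n))) \<longrightarrow>
              norm (\<Sum>n<N. x n) \<le> C * (\<Sum>n<N. norm (x n) powr p) powr (1 / p)) \<and>
          (\<forall>x. summable (\<lambda>n. norm (P n x) powr p) \<and>
              (\<Sum>n. norm (P n x) powr p) powr (1 / p) \<le> D * norm x)))
       \<or> (\<exists>C D.
          (\<forall>x N. (\<forall>n. x n \<in> range (blinfun_apply (P n))) \<longrightarrow>
              norm (\<Sum>n<N. x n) \<le> C * Max (insert 0 ((\<lambda>n. norm (x n)) ` {..<N}))) \<and>
          (\<forall>x. (\<lambda>n. P n x) \<longlonglongrightarrow> 0 \<and> (\<forall>n. norm (P n x) \<le> D * norm x)))"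
    and S_cpt: "\<And>n. compact_op_on (range (blinfun_apply (P n))) (S n)"
    and S_dist: "\<And>n. dist_approx_on (range (blinfun_apply (P n))) (S n) = 1"
    and S_norm: "\<And>n. opnorm_on (range (blinfun_apply (P n))) (S n) \<le> 2"
    and U_def: "\<And>n. U n = Blinfun (\<lambda>x. S n (P n x))"
  shows "\<forall>T\<in>B_pre U. \<forall>T'\<in>B_pre U. (T o\<^sub>L T') - (T' o\<^sub>L T) \<in> AX"
proof -
  define V where "V n = range (blinfun_apply (P n))" for n
  have V_scale: "c *\<^sub>R y \<in> V n" if "y \<in> V n" for c y n
    using that unfolding V_def by (auto simp: blinfun.scaleR_right[symmetric])
  have V_add: "y + z \<in> V n" if "y \<in> V n" "z \<in> V n" for y z n
    using that unfolding V_def by (auto simp: blinfun.add_right[symmetric])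
  have V_zero: "0 \<in> V n" for n unfolding V_def by (auto intro: range_eqI[of _ _ 0])
  have bop: "bounded_op_on (V n) (S n)" for n using S_cpt unfolding compact_op_on_def V_def by blast
  have S_in: "S n y \<in> V n" if "y \<in> V n" for n y using bop[of n] that unfolding bounded_op_on_def by blast
  have S_add: "S n (y + z) = S n y + S n z" if "y \<in> V n" "z \<in> V n" for n y z
    using bop[of n] that unfolding bounded_op_on_def by blast
  have S_scale: "S n (c *\<^sub>R y) = c *\<^sub>R S n y" if "y \<in> V n" for n y c
    using bop[of n] that unfolding bounded_op_on_def by blast
  have S_zero: "S n 0 = 0" for n using S_scale[OF V_zero, of n 0] by simp
  have S_bound: "norm (S n y) \<le> 2 * norm y" if y: "y \<in> V n" for n y
  proof (cases "y = 0")
    case True then show ?thesis by (simp add: S_zero)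
  next
    case False
    obtain K where K: "\<forall>y\<in>V n. norm (S n y) \<le> K * norm y" using bop[of n] unfolding bounded_op_on_def by blast
    have bdd: "bdd_above ((\<lambda>y. norm (S n y)) ` (V n \<inter> cball 0 1))"
    proof (rule bdd_aboveI2)
      fix w assume w: "w \<in> V n \<inter> cball 0 1"
      have "norm (S n w) \<le> K * norm w" using K w by blast
      also have "\<dots> \<le> \<bar>K\<bar> * norm w" by (intro mult_right_mono) auto
      also have "\<dots> \<le> \<bar>K\<bar> * 1" using w by (intro mult_left_mono) auto
      finally show "norm (S n w) \<le> \<bar>K\<bar>" by simp
    qed
    define w where "w = (1 / norm y) *\<^sub>R y"
    have w: "w \<in> V n \<inter> cball 0 1" unfolding w_def using V_scale[OF y] False by auto
    have "norm (S n w) \<le> opnorm_on (V n) (S n)"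
      unfolding opnorm_on_def using w bdd by (intro cSup_upper) auto
    also have "\<dots> \<le> 2" using S_norm unfolding V_def by blast
    finally have "norm (S n w) \<le> 2" .
    moreover have "norm (S n w) = norm (S n y) / norm y" unfolding w_def S_scale[OF y] using False by simp
    ultimately show ?thesis using False by (simp add: divide_le_eq)
  qed
  have PV: "P n x \<in> V n" for n x unfolding V_def by simp
  have U_app: "blinfun_apply (U n) x = S n (P n x)" for n x
  proof -
    have "bounded_linear (\<lambda>x. S n (P n x))"
    proof (rule bounded_linear_intro[where K = "2 * norm (P n)"])
      show "S n (P n (x + y)) = S n (P n x) + S n (P n y)" for x y
        by (simp add: blinfun.add_right S_add PV)
      show "S n (P n (r *\<^sub>R x)) = r *\<^sub>R S n (P n x)" for r x
        by (simp add: blinfun.scaleR_right S_scale PV)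
      show "norm (S n (P n x)) \<le> norm x * (2 * norm (P n))" for x
        using S_bound[OF PV, of n x] norm_blinfun[of "P n" x] by (simp add: algebra_simps)
    qed
    then show ?thesis unfolding U_def by (simp add: bounded_linear_Blinfun_apply)
  qed
  have U_orth: "U k o\<^sub>L U j = 0" if "j \<noteq> k" for j k
  proof (rule blinfun_eqI)
    fix x
    obtain z where z: "S j (P j x) = P j z" using S_in[OF PV, of j x] unfolding V_def by blast
    have "P k (P j z) = 0" using orth[of k j] that
      by (metis blinfun_apply_blinfun_compose zero_blinfun.rep_eq)
    then show "blinfun_apply (U k o\<^sub>L U j) x = blinfun_apply 0 x"
      by (simp add: U_app z S_zero)
  qed
  have Pbound: "norm (c *\<^sub>R S k (P k x)) \<le> 2 * \<epsilon> * norm (P k x)"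
    if "\<bar>c\<bar> \<le> \<epsilon>" for c \<epsilon> k x
  proof -
    have "norm (c *\<^sub>R S k (P k x)) = \<bar>c\<bar> * norm (S k (P k x))" by simp
    also have "\<dots> \<le> \<epsilon> * (2 * norm (P k x))"
      using that S_bound[OF PV, of k x] by (intro mult_mono) auto
    finally show ?thesis by simp
  qed
  have key: "\<exists>M. \<forall>c \<epsilon> n x. 0 \<le> \<epsilon> \<longrightarrow> (\<forall>k. \<bar>c k\<bar> \<le> \<epsilon>) \<longrightarrow>
      norm (\<Sum>k<n. c k *\<^sub>R U k x) \<le> M * \<epsilon> * norm x"
    using decomp
  proof (elim disjE exE conjE)
    fix p C D
    assume p: "p \<ge> 1"
      and hC: "\<forall>x N. (\<forall>n. x n \<in> range (blinfun_apply (P n))) \<longrightarrow>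
              norm (\<Sum>n<N. x n) \<le> C * (\<Sum>n<N. norm (x n) powr p) powr (1 / p)"
      and hD: "\<forall>x. summable (\<lambda>n. norm (P n x) powr p) \<and>
              (\<Sum>n. norm (P n x) powr p) powr (1 / p) \<le> D * norm x"
    show ?thesis
    proof (intro exI[of _ "2 * \<bar>C\<bar> * \<bar>D\<bar>"] allI impI)
      fix c :: "nat \<Rightarrow> real" and \<epsilon> :: real and n :: nat and x :: 'a assume e: "0 \<le> (\<epsilon>::real)" and c: "\<forall>k. \<bar>c k\<bar> \<le> \<epsilon>"
      define xk where "xk k = c k *\<^sub>R S k (P k x)" for k :: nat
      have "xk k \<in> V k" for k unfolding xk_def by (intro V_scale S_in PV)
      then have xkV: "\<forall>k. xk k \<in> range (blinfun_apply (P k))" unfolding V_def by blast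
      define Q where "Q = (\<Sum>k. norm (P k x) powr p)"
      have sQ: "summable (\<lambda>k. norm (P k x) powr p)" using hD by blast
      have QD: "Q powr (1 / p) \<le> D * norm x" using hD unfolding Q_def by blast
      have Q0: "0 \<le> Q" unfolding Q_def using sQ by (intro suminf_nonneg) auto
      have "(\<Sum>k<n. norm (xk k) powr p) \<le> (\<Sum>k<n. (2 * \<epsilon>) powr p * norm (P k x) powr p)"
      proof (rule sum_mono)
        fix k
        have "norm (xk k) powr p \<le> (2 * \<epsilon> * norm (P k x)) powr p"
          unfolding xk_def using Pbound c p by (intro powr_mono2) auto
        also have "\<dots> = (2 * \<epsilon>) powr p * norm (P k x) powr p"
          using e by (simp add: powr_mult)
        finally show "norm (xk k) powr p \<le> (2 * \<epsilon>) powr p * norm (P k x) powr p" .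
      qed
      also have "\<dots> = (2 * \<epsilon>) powr p * (\<Sum>k<n. norm (P k x) powr p)"
        by (simp add: sum_distrib_left)
      also have "\<dots> \<le> (2 * \<epsilon>) powr p * Q"
        unfolding Q_def using sQ by (intro mult_left_mono sum_le_suminf) auto
      finally have s1: "(\<Sum>k<n. norm (xk k) powr p) \<le> (2 * \<epsilon>) powr p * Q" .
      have "(\<Sum>k<n. norm (xk k) powr p) powr (1 / p) \<le> ((2 * \<epsilon>) powr p * Q) powr (1 / p)"
        using s1 p by (intro powr_mono2) (auto intro: sum_nonneg)
      also have "\<dots> = ((2 * \<epsilon>) powr p) powr (1 / p) * Q powr (1 / p)"
        using Q0 by (simp add: powr_mult)
      also have "((2 * \<epsilon>) powr p) powr (1 / p) = 2 * \<epsilon>"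
        using p e by (simp add: powr_powr)
      also have "2 * \<epsilon> * Q powr (1 / p) \<le> 2 * \<epsilon> * (\<bar>D\<bar> * norm x)"
        using QD e by (intro mult_left_mono) (auto intro: order_trans[OF _ mult_right_mono[of D "\<bar>D\<bar>"]])
      finally have Y: "(\<Sum>k<n. norm (xk k) powr p) powr (1 / p) \<le> 2 * \<epsilon> * (\<bar>D\<bar> * norm x)" .
      have "norm (\<Sum>k<n. c k *\<^sub>R U k x) = norm (\<Sum>k<n. xk k)"
        by (simp add: xk_def U_app)
      also have "\<dots> \<le> C * (\<Sum>k<n. norm (xk k) powr p) powr (1 / p)"
        using hC xkV by blast
      also have "\<dots> \<le> \<bar>C\<bar> * (\<Sum>k<n. norm (xk k) powr p) powr (1 / p)"
        by (intro mult_right_mono) auto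
      also have "\<dots> \<le> \<bar>C\<bar> * (2 * \<epsilon> * (\<bar>D\<bar> * norm x))"
        using Y by (intro mult_left_mono) auto
      also have "\<dots> = 2 * \<bar>C\<bar> * \<bar>D\<bar> * \<epsilon> * norm x" by simp
      finally show "norm (\<Sum>k<n. c k *\<^sub>R U k x) \<le> 2 * \<bar>C\<bar> * \<bar>D\<bar> * \<epsilon> * norm x" .
    qed
  next
    fix C D
    assume hC: "\<forall>x N. (\<forall>n. x n \<in> range (blinfun_apply (P n))) \<longrightarrow>
              norm (\<Sum>n<N. x n) \<le> C * Max (insert 0 ((\<lambda>n. norm (x n)) ` {..<N}))"
      and hD: "\<forall>x. (\<lambda>n. P n x) \<longlonglongrightarrow> 0 \<and> (\<forall>n. norm (P n x) \<le> D * norm x)"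
    show ?thesis
    proof (intro exI[of _ "2 * \<bar>C\<bar> * \<bar>D\<bar>"] allI impI)
      fix c :: "nat \<Rightarrow> real" and \<epsilon> :: real and n :: nat and x :: 'a assume e: "0 \<le> (\<epsilon>::real)" and c: "\<forall>k. \<bar>c k\<bar> \<le> \<epsilon>"
      define xk where "xk k = c k *\<^sub>R S k (P k x)" for k :: nat
      have "xk k \<in> V k" for k unfolding xk_def by (intro V_scale S_in PV)
      then have xkV: "\<forall>k. xk k \<in> range (blinfun_apply (P k))" unfolding V_def by blast
      define Mx where "Mx = Max (insert 0 ((\<lambda>k. norm (xk k)) ` {..<n}))"
      have Mx0: "0 \<le> Mx" unfolding Mx_def by (intro Max_ge) auto
      have "Mx \<le> 2 * \<epsilon> * (\<bar>D\<bar> * norm x)"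
        unfolding Mx_def
      proof (subst Max_le_iff, simp, simp, intro ballI)
        fix t assume "t \<in> insert 0 ((\<lambda>k. norm (xk k)) ` {..<n})"
        then consider "t = 0" | k where "t = norm (xk k)" by blast
        then show "t \<le> 2 * \<epsilon> * (\<bar>D\<bar> * norm x)"
        proof cases
          case 1 then show ?thesis using e by simp
        next
          case 2
          have "t \<le> 2 * \<epsilon> * norm (P k x)" unfolding 2 xk_def using Pbound c by blast
          also have "\<dots> \<le> 2 * \<epsilon> * (\<bar>D\<bar> * norm x)"
            using e hD by (intro mult_left_mono) (auto intro: order_trans[OF _ mult_right_mono[of D "\<bar>D\<bar>"]])
          finally show ?thesis .
        qed
      qed
      note Y = this
      have "norm (\<Sum>k<n. c k *\<^sub>R U k x) = norm (\<Sum>k<n. xk k)"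
        by (simp add: xk_def U_app)
      also have "\<dots> \<le> C * Mx"
        unfolding Mx_def using hC xkV by blast
      also have "\<dots> \<le> \<bar>C\<bar> * Mx"
        using Mx0 by (intro mult_right_mono) auto
      also have "\<dots> \<le> \<bar>C\<bar> * (2 * \<epsilon> * (\<bar>D\<bar> * norm x))"
        using Y by (intro mult_left_mono) auto
      also have "\<dots> = 2 * \<bar>C\<bar> * \<bar>D\<bar> * \<epsilon> * norm x" by simp
      finally show "norm (\<Sum>k<n. c k *\<^sub>R U k x) \<le> 2 * \<bar>C\<bar> * \<bar>D\<bar> * \<epsilon> * norm x" .
    qed
  qed
  then obtain M where M: "\<And>c \<epsilon> n x. 0 \<le> \<epsilon> \<Longrightarrow> (\<forall>k. \<bar>c k\<bar> \<le> \<epsilon>) \<Longrightarrow>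
      norm (\<Sum>k<n. c k *\<^sub>R U k x) \<le> M * \<epsilon> * norm x" by blast
  have summ: "summable (\<lambda>k. a k *\<^sub>R U k)" if "a \<longlonglongrightarrow> 0" for a
    using summable_psi[OF M that] by blast
  have gens: "(psi_rep U a o\<^sub>L psi_rep U b) - (psi_rep U b o\<^sub>L psi_rep U a) = 0"
    if "a \<longlonglongrightarrow> 0" "b \<longlonglongrightarrow> 0" for a b
    using prod_formula[OF summ[OF that(1)] summ[OF that(2)] U_orth]
      prod_formula[OF summ[OF that(2)] summ[OF that(1)] U_orth]
    by (simp add: mult.commute)
  have step2: "(psi_rep U a o\<^sub>L T) - (T o\<^sub>L psi_rep U a) \<in> AX"
    if "a \<longlonglongrightarrow> 0" "T \<in> B_pre U" for a T
    using comm_lemma[of "psi_rep U a" U T] gens[OF that(1)] AX_zero that(2) by simp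
  show ?thesis
  proof (intro ballI)
    fix T T' assume T: "T \<in> B_pre U" and T': "T' \<in> B_pre U"
    have "(T o\<^sub>L psi_rep U a) - (psi_rep U a o\<^sub>L T) \<in> AX" if "a \<longlonglongrightarrow> 0" for a
      using AX_uminus[OF step2[OF that T]] by simp
    then show "(T o\<^sub>L T') - (T' o\<^sub>L T) \<in> AX"
      using comm_lemma[of T U T'] T' by blast
  qed
qed

end
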